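(* Let $G=(V,E)$ be a finite simple connected graph, and let $T(G)$ be the largest $t$ such that $G$ contains a $t$-tuplet. Then $IDI(G)\ge T(G)$.
   Context: For a graph $G=(V,E)$, a set $S\subseteq V$ with $|S|=t\ge 2$ is a $t$-tuplet if either $S$ is an independent set and any two vertices of $S$ have the same (open) neighborhood, or $S$ is a clique and any two vertices of $S$ have the same closed neighborhood $N(v)\cup\{v\}$. For $G$ with diameter $d$, a rank assignment is a function $f:V\to\mathbb{R}$; under $f$, the string of a vertex $v$ is the $d$-vector whose $i$-th coordinate is the sum of $f(w)$ over all vertices $w$ with $d(v,w)=i$. The ID-index $IDI(G)$ is the minimum $k$ such that there exists $f:V\to\mathbb{R}$ with $|f(V)|=k$ under which all vertices have distinct strings. *)

theory Defs
  imports Complex_Main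
begin

definition simple_graph :: "'a set \<Rightarrow> ('a \<Rightarrow> 'a \<Rightarrow> bool) \<Rightarrow> bool" where
  "simple_graph V E \<longleftrightarrow> finite V \<and> (\<forall>u v. E u v \<longrightarrow> u \<in> V \<and> v \<in> V)
     \<and> (\<forall>u v. E u v \<longrightarrow> E v u) \<and> (\<forall>v. \<not> E v v)"

definition is_walk :: "'a set \<Rightarrow> ('a \<Rightarrow> 'a \<Rightarrow> bool) \<Rightarrow> 'a \<Rightarrow> 'a \<Rightarrow> nat \<Rightarrow> bool" where
  "is_walk V E u v n \<longleftrightarrow> (\<exists>xs. length xs = Suc n \<and> hd xs = u \<and> last xs = v
      \<and> set xs \<subseteq> V \<and> (\<forall>i<n. E (xs ! i) (xs ! Suc i)))"

definition connected_graph :: "'a set \<Rightarrow> ('a \<Rightarrow> 'a \<Rightarrow> bool) \<Rightarrow> bool" where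
  "connected_graph V E \<longleftrightarrow> (\<forall>u\<in>V. \<forall>v\<in>V. \<exists>n. is_walk V E u v n)"

definition gdist :: "'a set \<Rightarrow> ('a \<Rightarrow> 'a \<Rightarrow> bool) \<Rightarrow> 'a \<Rightarrow> 'a \<Rightarrow> nat" where
  "gdist V E u v = (LEAST n. is_walk V E u v n)"

definition diameter :: "'a set \<Rightarrow> ('a \<Rightarrow> 'a \<Rightarrow> bool) \<Rightarrow> nat" where
  "diameter V E = Max ({gdist V E u v | u v. u \<in> V \<and> v \<in> V} \<union> {0})"

definition vstring :: "'a set \<Rightarrow> ('a \<Rightarrow> 'a \<Rightarrow> bool) \<Rightarrow> ('a \<Rightarrow> real) \<Rightarrow> 'a \<Rightarrow> real list" where
  "vstring V E f v = map (\<lambda>i. \<Sum>w\<in>{w\<in>V. gdist V E v w = i}. f w) [1..<Suc (diameter V E)]"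

definition IDI :: "'a set \<Rightarrow> ('a \<Rightarrow> 'a \<Rightarrow> bool) \<Rightarrow> nat" where
  "IDI V E = (LEAST k. \<exists>f :: 'a \<Rightarrow> real. card (f ` V) = k \<and> inj_on (vstring V E f) V)"

definition nbhd :: "'a set \<Rightarrow> ('a \<Rightarrow> 'a \<Rightarrow> bool) \<Rightarrow> 'a \<Rightarrow> 'a set" where
  "nbhd V E v = {w \<in> V. E v w}"

definition is_tuplet :: "'a set \<Rightarrow> ('a \<Rightarrow> 'a \<Rightarrow> bool) \<Rightarrow> 'a set \<Rightarrow> bool" where
  "is_tuplet V E S \<longleftrightarrow> S \<subseteq> V \<and> finite S \<and> card S \<ge> 2 \<and>
     ((\<forall>x\<in>S. \<forall>y\<in>S. \<not> E x y \<and> nbhd V E x = nbhd V E y)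
      \<or> (\<forall>x\<in>S. \<forall>y\<in>S. (x \<noteq> y \<longrightarrow> E x y) \<and> insert x (nbhd V E x) = insert y (nbhd V E y)))"

definition max_tuplet :: "'a set \<Rightarrow> ('a \<Rightarrow> 'a \<Rightarrow> bool) \<Rightarrow> nat" where
  "max_tuplet V E = Max (insert 0 {card S | S. is_tuplet V E S})"

end

theory Submission
  imports Defs "HOL-Library.Nat_Bijection"
begin

lemma walk_rev:
  assumes sg: "simple_graph V E" and w: "is_walk V E u v n"
  shows "is_walk V E v u n"
proof -
  obtain xs where xs: "length xs = Suc n" "hd xs = u" "last xs = v" "set xs \<subseteq> V"
    "\<forall>i<n. E (xs ! i) (xs ! Suc i)" using w unfolding is_walk_def by blast
  have ne: "xs \<noteq> []" using xs(1) by auto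
  have "\<forall>i<n. E (rev xs ! i) (rev xs ! Suc i)"
  proof (intro allI impI)
    fix i assume i: "i < n"
    have "E (xs ! (n - Suc i)) (xs ! Suc (n - Suc i))" using xs(5) i by auto
    then have "E (xs ! Suc (n - Suc i)) (xs ! (n - Suc i))" using sg unfolding simple_graph_def by blast
    moreover have "Suc (n - Suc i) = n - i" using i by auto
    ultimately show "E (rev xs ! i) (rev xs ! Suc i)" using i xs(1) by (simp add: rev_nth)
  qed
  then show ?thesis unfolding is_walk_def using xs ne
    by (intro exI[of _ "rev xs"]) (auto simp: hd_rev last_rev)
qed

lemma gdist_le: "is_walk V E u v n \<Longrightarrow> gdist V E u v \<le> n"
  unfolding gdist_def by (rule Least_le)

lemma gdist_walk: "connected_graph V E \<Longrightarrow> u \<in> V \<Longrightarrow> v \<in> V \<Longrightarrow> is_walk V E u v (gdist V E u v)"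
  unfolding gdist_def connected_graph_def by (meson LeastI_ex)

lemma gdist_sym:
  assumes "simple_graph V E" "connected_graph V E" "u \<in> V" "v \<in> V"
  shows "gdist V E u v = gdist V E v u"
  by (meson assms gdist_le gdist_walk le_antisym walk_rev)

lemma gdist_self: "x \<in> V \<Longrightarrow> gdist V E x x = 0"
proof -
  assume "x \<in> V"
  then have "is_walk V E x x 0" unfolding is_walk_def by (intro exI[of _ "[x]"]) auto
  then show ?thesis using gdist_le by fastforce
qed

lemma gdist_zero:
  assumes "connected_graph V E" "u \<in> V" "v \<in> V" "gdist V E u v = 0"
  shows "u = v"
proof -
  have "is_walk V E u v 0" using gdist_walk[OF assms(1-3)] assms(4) by simp
  then obtain xs where "length xs = 1" "hd xs = u" "last xs = v" unfolding is_walk_def by auto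
  then show ?thesis by (cases xs) auto
qed

lemma walk_swap_head:
  assumes w: "is_walk V E x w n" and wx: "w \<noteq> x" and yV: "y \<in> V"
    and nb: "\<forall>z. E x z \<longrightarrow> (z = y \<or> E y z)"
  shows "\<exists>m\<le>n. is_walk V E y w m"
proof -
  obtain xs where xs: "length xs = Suc n" "hd xs = x" "last xs = w" "set xs \<subseteq> V"
    "\<forall>i<n. E (xs ! i) (xs ! Suc i)" using w unfolding is_walk_def by blast
  have "n \<noteq> 0"
  proof
    assume "n = 0" then obtain a where "xs = [a]" using xs(1) by (cases xs) auto
    then show False using xs wx by auto
  qed
  then obtain k where k: "n = Suc k" by (cases n) auto
  have h0: "xs ! 0 = x" using xs(1,2) by (cases xs) auto
  have "E (xs ! 0) (xs ! Suc 0)" using xs(5) k by blast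
  then have e1: "E x (xs ! 1)" using h0 by simp
  have tlne: "tl xs \<noteq> []" using xs(1) k by (cases xs) auto
  have ltl: "last (tl xs) = w" using tlne xs(3) by (simp add: last_tl)
  have stl: "set (tl xs) \<subseteq> V" using xs(4) by (cases xs) auto
  have tlnth: "\<And>j. tl xs ! j = xs ! Suc j" using tlne by (cases xs) auto
  have htl: "hd (tl xs) = xs ! 1" using tlne by (cases xs) (auto simp: hd_conv_nth)
  show ?thesis
  proof (cases "xs ! 1 = y")
    case True
    have "is_walk V E y w k" unfolding is_walk_def
    proof (intro exI[of _ "tl xs"] conjI)
      show "\<forall>i<k. E (tl xs ! i) (tl xs ! Suc i)" using xs(5) k tlnth by auto
    qed (use xs(1) k ltl stl htl True in auto)
    then show ?thesis using k by (intro exI[of _ k]) auto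
  next
    case False
    then have ey: "E y (xs ! 1)" using nb e1 by auto
    have "is_walk V E y w n" unfolding is_walk_def
    proof (intro exI[of _ "y # tl xs"] conjI)
      show "\<forall>i<n. E ((y # tl xs) ! i) ((y # tl xs) ! Suc i)"
      proof (intro allI impI)
        fix i assume i: "i < n"
        show "E ((y # tl xs) ! i) ((y # tl xs) ! Suc i)"
        proof (cases i)
          case 0 then show ?thesis using ey tlnth by simp
        next
          case (Suc j) then show ?thesis using xs(5) i tlnth by auto
        qed
      qed
    qed (use xs(1) k ltl stl yV tlne in auto)
    then show ?thesis by auto
  qed
qed

lemma tuplet_nb:
  assumes sg: "simple_graph V E" and t: "is_tuplet V E S" and "x \<in> S" "y \<in> S" "x \<noteq> y"
  shows "\<forall>z. E x z \<longrightarrow> (z = y \<or> E y z)"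
proof (intro allI impI)
  fix z assume ez: "E x z"
  then have zV: "z \<in> V" using sg unfolding simple_graph_def by blast
  have zn: "z \<in> nbhd V E x" using ez zV unfolding nbhd_def by auto
  from t consider "nbhd V E x = nbhd V E y" | "insert x (nbhd V E x) = insert y (nbhd V E y)"
    unfolding is_tuplet_def using assms(3,4) by blast
  then show "z = y \<or> E y z"
  proof cases
    case 1 then show ?thesis using zn unfolding nbhd_def by auto
  next
    case 2 then have "z \<in> insert y (nbhd V E y)" using zn by blast
    then show ?thesis unfolding nbhd_def by auto
  qed
qed

lemma tuplet_dist_le:
  assumes sg: "simple_graph V E" and cg: "connected_graph V E" and t: "is_tuplet V E S"
    and xy: "x \<in> S" "y \<in> S" "x \<noteq> y" and w: "w \<in> V" "w \<noteq> x"
  shows "gdist V E y w \<le> gdist V E x w"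
proof -
  have SV: "S \<subseteq> V" using t unfolding is_tuplet_def by blast
  have "is_walk V E x w (gdist V E x w)" using gdist_walk[OF cg] SV xy w by blast
  then obtain m where "m \<le> gdist V E x w" "is_walk V E y w m"
    using walk_swap_head[OF _ w(2) _ tuplet_nb[OF sg t xy]] SV xy by blast
  then show ?thesis using gdist_le by (meson le_trans)
qed

lemma tuplet_dist:
  assumes sg: "simple_graph V E" and cg: "connected_graph V E" and t: "is_tuplet V E S"
    and xy: "x \<in> S" "y \<in> S" "x \<noteq> y" and w: "w \<in> V" "w \<noteq> x" "w \<noteq> y"
  shows "gdist V E x w = gdist V E y w"
  using tuplet_dist_le[OF sg cg t xy w(1,2)] tuplet_dist_le[OF sg cg t xy(2,1) _ w(1,3)] xy(3)
  by auto

lemma tuplet_inj: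
  assumes sg: "simple_graph V E" and cg: "connected_graph V E" and t: "is_tuplet V E S"
    and inj: "inj_on (vstring V E f) V"
  shows "inj_on f S"
proof (rule inj_onI, rule ccontr)
  fix x y assume xy: "x \<in> S" "y \<in> S" "f x = f y" "x \<noteq> y"
  have SV: "S \<subseteq> V" using t unfolding is_tuplet_def by blast
  define \<sigma> where "\<sigma> = (\<lambda>w. if w = x then y else if w = y then x else w)"
  have ss: "\<And>w. \<sigma> (\<sigma> w) = w" unfolding \<sigma>_def by auto
  have sV: "\<And>w. w \<in> V \<Longrightarrow> \<sigma> w \<in> V" unfolding \<sigma>_def using SV xy by auto
  have fs: "\<And>w. f (\<sigma> w) = f w" unfolding \<sigma>_def using xy by auto
  have ds: "gdist V E x w = gdist V E y (\<sigma> w)" if wV: "w \<in> V" for w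
  proof -
    consider "w = x" | "w = y" | "w \<noteq> x" "w \<noteq> y" by blast
    then show ?thesis
    proof cases
      case 1
      have "x \<in> V" "y \<in> V" using SV xy by auto
      then have "gdist V E x x = 0" "gdist V E y y = 0" by (simp_all add: gdist_self)
      then show ?thesis unfolding \<sigma>_def using 1 by simp
    next
      case 2
      have "x \<in> V" "y \<in> V" using SV xy by auto
      then have "gdist V E x y = gdist V E y x" by (rule gdist_sym[OF sg cg])
      then show ?thesis unfolding \<sigma>_def using 2 xy(4) by simp
    next
      case 3
      have "gdist V E x w = gdist V E y w" by (rule tuplet_dist[OF sg cg t xy(1,2,4) wV 3])
      then show ?thesis unfolding \<sigma>_def using 3 by simp
    qed
  qed
  have "(\<Sum>w\<in>{w\<in>V. gdist V E x w = i}. f w) = (\<Sum>w\<in>{w\<in>V. gdist V E y w = i}. f w)" for i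
  proof (rule sum.reindex_bij_witness[of _ \<sigma> \<sigma>])
    fix a assume "a \<in> {w\<in>V. gdist V E y w = i}"
    then have a: "a \<in> V" "gdist V E y a = i" by auto
    have "gdist V E x (\<sigma> a) = gdist V E y (\<sigma> (\<sigma> a))" using ds sV a(1) by blast
    then show "\<sigma> a \<in> {w\<in>V. gdist V E x w = i}" using a sV ss by simp
  next
    fix b assume "b \<in> {w\<in>V. gdist V E x w = i}"
    then have b: "b \<in> V" "gdist V E x b = i" by auto
    have "gdist V E x b = gdist V E y (\<sigma> b)" using ds b(1) by blast
    then show "\<sigma> b \<in> {w\<in>V. gdist V E y w = i}" using b sV by simp
  qed (simp_all add: ss fs)
  then have "vstring V E f x = vstring V E f y" unfolding vstring_def by simp
  moreover have "x \<in> V" "y \<in> V" using SV xy by auto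
  ultimately show False using inj xy(4) by (meson inj_onD)
qed

lemma exists_f:
  assumes sg: "simple_graph V E" and cg: "connected_graph V E"
  shows "\<exists>f. inj_on (vstring V E f) V"
proof -
  have fin: "finite V" using sg unfolding simple_graph_def by blast
  obtain g :: "'a \<Rightarrow> nat" and n where g: "inj_on g V" using finite_imp_inj_to_nat_seg[OF fin] by blast
  define f where "f = (\<lambda>w. real (2 ^ g w))"
  have sumf: "(\<Sum>w\<in>A. f w) = real (set_encode (g ` A))" if "A \<subseteq> V" for A
  proof -
    have "inj_on g A" using g that by (rule inj_on_subset)
    then have "sum ((^) 2) (g ` A) = sum (((^) (2::nat)) \<circ> g) A" by (rule sum.reindex)
    then have "set_encode (g ` A) = (\<Sum>w\<in>A. 2 ^ g w)" unfolding set_encode_def comp_def .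
    then have "real (set_encode (g ` A)) = (\<Sum>w\<in>A. real (2 ^ g w))" by (simp only: of_nat_sum)
    then show ?thesis unfolding f_def by (rule sym)
  qed
  have sinj: "A = B" if "A \<subseteq> V" "B \<subseteq> V" "(\<Sum>w\<in>A. f w) = (\<Sum>w\<in>B. f w)" for A B
  proof -
    have "real (set_encode (g ` A)) = (\<Sum>w\<in>A. f w)" using sumf[OF that(1)] by (rule sym)
    also have "\<dots> = (\<Sum>w\<in>B. f w)" by (rule that(3))
    also have "\<dots> = real (set_encode (g ` B))" by (rule sumf[OF that(2)])
    finally have "real (set_encode (g ` A)) = real (set_encode (g ` B))" .
    then have se: "set_encode (g ` A) = set_encode (g ` B)" by (simp only: of_nat_eq_iff)
    have fA: "finite (g ` A)" using finite_subset[OF that(1) fin] by (rule finite_imageI)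
    have fB: "finite (g ` B)" using finite_subset[OF that(2) fin] by (rule finite_imageI)
    have "g ` A = g ` B" using set_encode_eq[OF fA fB] se by (rule iffD1)
    then show ?thesis using inj_on_image_eq_iff[OF g that(1,2)] by simp
  qed
  have finD: "finite {gdist V E u v | u v. u \<in> V \<and> v \<in> V}"
  proof (rule finite_subset)
    show "{gdist V E u v | u v. u \<in> V \<and> v \<in> V} \<subseteq> (\<lambda>(u,v). gdist V E u v) ` (V \<times> V)" by auto
    show "finite ((\<lambda>(u,v). gdist V E u v) ` (V \<times> V))" using fin by simp
  qed
  have "inj_on (vstring V E f) V"
  proof (rule inj_onI, rule ccontr)
    fix x y assume x: "x \<in> V" and y: "y \<in> V" and eq: "vstring V E f x = vstring V E f y" and ne: "x \<noteq> y"
    define i where "i = gdist V E x y"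
    have i0: "i \<noteq> 0" using gdist_zero[OF cg x y] ne unfolding i_def by blast
    have "i \<in> {gdist V E u v | u v. u \<in> V \<and> v \<in> V} \<union> {0}" using x y unfolding i_def by blast
    then have iD: "i \<le> diameter V E" unfolding diameter_def using finD by (intro Max_ge) auto
    have all: "\<forall>j\<in>set [1..<Suc (diameter V E)]. (\<Sum>w\<in>{w\<in>V. gdist V E x w = j}. f w) = (\<Sum>w\<in>{w\<in>V. gdist V E y w = j}. f w)"
      using eq unfolding vstring_def map_eq_conv .
    have "i \<in> set [1..<Suc (diameter V E)]" unfolding set_upt using iD i0 by auto
    then have "(\<Sum>w\<in>{w\<in>V. gdist V E x w = i}. f w) = (\<Sum>w\<in>{w\<in>V. gdist V E y w = i}. f w)"
      using all by blast
    moreover have "{w\<in>V. gdist V E x w = i} \<subseteq> V" "{w\<in>V. gdist V E y w = i} \<subseteq> V" by blast+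
    ultimately have "{w\<in>V. gdist V E x w = i} = {w\<in>V. gdist V E y w = i}" using sinj by blast
    moreover have "y \<in> {w\<in>V. gdist V E x w = i}" using y unfolding i_def by simp
    ultimately have "y \<in> {w\<in>V. gdist V E y w = i}" by (rule subst)
    then have "gdist V E y y = i" by simp
    then show False using gdist_self[OF y] i0 by simp
  qed
  then show ?thesis by blast
qed

theorem mainTheorem3:
  fixes V :: "'a set" and E :: "'a \<Rightarrow> 'a \<Rightarrow> bool"
  assumes "simple_graph V E" and "connected_graph V E"
  shows "IDI V E \<ge> max_tuplet V E"
proof -
  obtain f0 where "inj_on (vstring V E f0) V" using exists_f[OF assms] by blast
  then have "\<exists>k. \<exists>f :: 'a \<Rightarrow> real. card (f ` V) = k \<and> inj_on (vstring V E f) V" by blast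
  then have "\<exists>f :: 'a \<Rightarrow> real. card (f ` V) = IDI V E \<and> inj_on (vstring V E f) V"
    unfolding IDI_def by (rule LeastI_ex)
  then obtain f :: "'a \<Rightarrow> real" where f: "card (f ` V) = IDI V E" "inj_on (vstring V E f) V" by blast
  have fin: "finite V" using assms(1) unfolding simple_graph_def by blast
  have le: "card S \<le> IDI V E" if t: "is_tuplet V E S" for S
  proof -
    have SV: "S \<subseteq> V" using t unfolding is_tuplet_def by blast
    have "card S = card (f ` S)" using tuplet_inj[OF assms t f(2)] by (simp add: card_image)
    also have "\<dots> \<le> card (f ` V)" using SV fin by (intro card_mono) auto
    finally show ?thesis using f(1) by simp
  qed
  have sub: "insert 0 {card S | S. is_tuplet V E S} \<subseteq> {..IDI V E}" using le by auto
  have "finite (insert 0 {card S | S. is_tuplet V E S})" using finite_subset[OF sub] by simp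
  then show ?thesis unfolding max_tuplet_def
    by (rule Max.boundedI) (use sub in auto)
qed

end
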